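(* There is a universal constant $c_{\mathrm{var}}>0$ such that for all $d,n\ge1$, $C_{\mathsf{MSE}}>0$, and every measurable $f\colon(\mathbb R^d)^n\to\mathbb R^d$ with \[\sup_{\mu\in\mathbb R^d}\mathbb E_{X\sim\mathcal N(\mu,\mathbb I_d)^{\otimes n}}\|f(X)-\mu\|_2^2\le C_{\mathsf{MSE}}\frac dn,\] there exists $\mu^*\in\mathbb R^d$ such that $\mathrm{Var}_{\mu^*}(f)\ge c_{\mathrm{var}}\frac dn$.
   Context: $\mathrm{Var}_\mu(f)=\mathbb E_X\|f(X)-\mathbb E_Xf(X)\|_2^2$ for $X\sim\mathcal N(\mu,\mathbb I_d)^{\otimes n}$. *)

theory Defs
  imports "HOL-Probability.Probability"
begin

text \<open>Points of (R^d)^n are represented as X :: nat => nat => real, where X j i is the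
  i-th coordinate (i < d) of the j-th sample (j < n).  Vectors in R^d are nat => real,
  only indices i < d being relevant.\<close>

definition gauss_sample :: "nat \<Rightarrow> nat \<Rightarrow> (nat \<Rightarrow> real) \<Rightarrow> (nat \<Rightarrow> nat \<Rightarrow> real) measure" where
  "gauss_sample d n \<mu> =
     PiM {..<n} (\<lambda>_. PiM {..<d} (\<lambda>i. density lborel (normal_density (\<mu> i) 1)))"

definition sample_space_borel :: "nat \<Rightarrow> nat \<Rightarrow> (nat \<Rightarrow> nat \<Rightarrow> real) measure" where
  "sample_space_borel d n = PiM {..<n} (\<lambda>_. PiM {..<d} (\<lambda>_. lborel))"

definition mse :: "nat \<Rightarrow> nat \<Rightarrow> ((nat \<Rightarrow> nat \<Rightarrow> real) \<Rightarrow> nat \<Rightarrow> real) \<Rightarrow> (nat \<Rightarrow> real) \<Rightarrow> ennreal" where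
  "mse d n f \<mu> = (\<integral>\<^sup>+ X. ennreal (\<Sum>i<d. (f X i - \<mu> i)\<^sup>2) \<partial>gauss_sample d n \<mu>)"

definition var_est :: "nat \<Rightarrow> nat \<Rightarrow> ((nat \<Rightarrow> nat \<Rightarrow> real) \<Rightarrow> nat \<Rightarrow> real) \<Rightarrow> (nat \<Rightarrow> real) \<Rightarrow> ennreal" where
  "var_est d n f \<mu> = (\<integral>\<^sup>+ X. ennreal (\<Sum>i<d. (f X i - (\<integral> Y. f Y i \<partial>gauss_sample d n \<mu>))\<^sup>2)
       \<partial>gauss_sample d n \<mu>)"

end

theory Submission
  imports Defs
begin

lemma prod_indicator_PiE:
  assumes "finite I" "x \<in> extensional I"
  shows "(\<Prod>i\<in>I. indicator (A i) (x i) :: ennreal) = indicator (PiE I A) x"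
proof (cases "x \<in> PiE I A")
  case True
  have "\<forall>i\<in>I. indicator (A i) (x i) = (1::ennreal)"
    using PiE_mem[OF True] by simp
  then show ?thesis using True by (simp add: prod.neutral)
next
  case False
  then obtain i where i: "i \<in> I" "x i \<notin> A i" using assms(2) unfolding PiE_def Pi_def by blast
  have z: "indicator (A i) (x i) = (0::ennreal)" using i(2) by simp
  have "(\<Prod>i\<in>I. indicator (A i) (x i) :: ennreal) = 0"
    by (rule prod_zero[OF assms(1)]) (use i(1) z in blast)
  then show ?thesis using False by simp
qed

lemma PiM_density:
  fixes g :: "'i \<Rightarrow> 'a \<Rightarrow> ennreal"
  assumes I: "finite I" and M: "\<And>i. sigma_finite_measure (M i)"
    and D: "\<And>i. sigma_finite_measure (density (M i) (g i))"
    and g[measurable]: "\<And>i. g i \<in> borel_measurable (M i)"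
  shows "density (PiM I M) (\<lambda>x. \<Prod>i\<in>I. g i (x i)) = PiM I (\<lambda>i. density (M i) (g i))"
proof -
  interpret D: product_sigma_finite "\<lambda>i. density (M i) (g i)"
    by (simp add: product_sigma_finite_def D)
  interpret M: product_sigma_finite M
    by (simp add: product_sigma_finite_def M)
  show ?thesis
  proof (rule D.PiM_eqI[OF I])
    show "sets (density (PiM I M) (\<lambda>x. \<Prod>i\<in>I. g i (x i))) = sets (PiM I (\<lambda>i. density (M i) (g i)))"
      unfolding sets_density by (rule sets_PiM_cong) simp_all
  next
    fix A assume A: "\<And>i. i \<in> I \<Longrightarrow> A i \<in> sets (density (M i) (g i))"
    then have A': "\<And>i. i \<in> I \<Longrightarrow> A i \<in> sets (M i)" by simp
    have PA: "PiE I A \<in> sets (PiM I M)" using sets_PiM_I_finite[OF I A'] by simp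
    have Gm: "(\<lambda>x. \<Prod>i\<in>I. g i (x i)) \<in> borel_measurable (PiM I M)" by measurable
    have "emeasure (density (PiM I M) (\<lambda>x. \<Prod>i\<in>I. g i (x i))) (PiE I A)
        = (\<integral>\<^sup>+ x. (\<Prod>i\<in>I. g i (x i)) * indicator (PiE I A) x \<partial>PiM I M)"
      by (rule emeasure_density[OF Gm PA])
    also have "\<dots> = (\<integral>\<^sup>+ x. (\<Prod>i\<in>I. g i (x i) * indicator (A i) (x i)) \<partial>PiM I M)"
    proof (rule nn_integral_cong)
      fix x assume "x \<in> space (PiM I M)"
      then have "x \<in> extensional I" by (simp add: space_PiM PiE_iff)
      then show "(\<Prod>i\<in>I. g i (x i)) * indicator (PiE I A) x = (\<Prod>i\<in>I. g i (x i) * indicator (A i) (x i))"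
        by (simp add: prod.distrib prod_indicator_PiE[OF I])
    qed
    also have "\<dots> = (\<Prod>i\<in>I. \<integral>\<^sup>+ y. g i y * indicator (A i) y \<partial>M i)"
    proof (rule M.product_nn_integral_prod[OF I])
      fix i assume "i \<in> I"
      then have [measurable]: "A i \<in> sets (M i)" by (rule A')
      show "(\<lambda>y. g i y * indicator (A i) y) \<in> borel_measurable (M i)" by measurable
    qed
    also have "\<dots> = (\<Prod>i\<in>I. emeasure (density (M i) (g i)) (A i))"
      by (rule prod.cong[OF refl]) (simp add: emeasure_density A')
    finally show "emeasure (density (PiM I M) (\<lambda>x. \<Prod>i\<in>I. g i (x i))) (PiE I A) = (\<Prod>i\<in>I. emeasure (density (M i) (g i)) (A i))" .
  qed
qed


definition gdens :: "nat \<Rightarrow> nat \<Rightarrow> (nat \<Rightarrow> real) \<Rightarrow> (nat \<Rightarrow> nat \<Rightarrow> real) \<Rightarrow> real" where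
  "gdens d n \<mu> X = (\<Prod>j<n. \<Prod>i<d. normal_density (\<mu> i) 1 (X j i))"

lemma sf_PiM_lborel: "sigma_finite_measure (PiM {..<d::nat} (\<lambda>_. lborel :: real measure))"
proof -
  interpret finite_product_sigma_finite "\<lambda>_. lborel :: real measure" "{..<d}"
    by (simp add: finite_product_sigma_finite_def product_sigma_finite_def sigma_finite_lborel
        finite_product_sigma_finite_axioms_def)
  show ?thesis unfolding sigma_finite_measure_def by (rule sigma_finite_countable)
qed

lemma inner_density:
  "PiM {..<d::nat} (\<lambda>i. density lborel (normal_density (\<mu> i) 1)) =
   density (PiM {..<d} (\<lambda>_. lborel)) (\<lambda>x. ennreal (\<Prod>i<d. normal_density (\<mu> i) 1 (x i)))"
proof -
  have "density (PiM {..<d} (\<lambda>_. lborel)) (\<lambda>x. \<Prod>i<d. ennreal (normal_density (\<mu> i) 1 (x i)))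
      = PiM {..<d} (\<lambda>i. density lborel (normal_density (\<mu> i) 1))"
    by (rule PiM_density) (auto simp: sigma_finite_lborel prob_space_imp_sigma_finite prob_space_normal_density)
  moreover have "(\<lambda>x. \<Prod>i<d. ennreal (normal_density (\<mu> i) 1 (x i))) = (\<lambda>x. ennreal (\<Prod>i<d. normal_density (\<mu> i) 1 (x i)))"
    by (simp add: prod_ennreal)
  ultimately show ?thesis by simp
qed

lemma prob_inner: "prob_space (PiM {..<d::nat} (\<lambda>i. density lborel (normal_density (\<mu> i) 1)))"
  by (rule prob_space_PiM) (auto intro: prob_space_normal_density)

lemma prob_gauss: "prob_space (gauss_sample d n \<mu>)"
  unfolding gauss_sample_def by (rule prob_space_PiM) (rule prob_inner)

lemma gauss_density:
  "gauss_sample d n \<mu> = density (sample_space_borel d n) (\<lambda>X. ennreal (gdens d n \<mu> X))"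
proof -
  let ?q = "\<lambda>x. ennreal (\<Prod>i<d. normal_density (\<mu> i) 1 (x i))"
  have qm: "?q \<in> borel_measurable (PiM {..<d} (\<lambda>_. lborel))" by measurable
  have "density (PiM {..<n} (\<lambda>_. PiM {..<d} (\<lambda>_. lborel))) (\<lambda>X. \<Prod>j<n. ?q (X j))
      = PiM {..<n} (\<lambda>_. density (PiM {..<d} (\<lambda>_. lborel)) ?q)"
    by (rule PiM_density) (auto simp: sf_PiM_lborel prob_space_imp_sigma_finite
         inner_density[symmetric] prob_inner qm)
  moreover have "(\<lambda>X. \<Prod>j<n. ?q (X j)) = (\<lambda>X. ennreal (gdens d n \<mu> X))"
    by (simp add: prod_ennreal gdens_def prod_nonneg)
  ultimately show ?thesis
    unfolding gauss_sample_def sample_space_borel_def inner_density by simp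
qed


lemma normal_density_shift:
  "normal_density (m + t) 1 x = normal_density m 1 x * exp (t * (x - m) - t\<^sup>2 / 2)"
proof -
  have "- (x - (m + t))\<^sup>2 / (2 * 1\<^sup>2) = - (x - m)\<^sup>2 / (2 * 1\<^sup>2) + (t * (x - m) - t\<^sup>2 / 2)"
    by (simp add: power2_eq_square field_simps)
  then have "exp (- (x - (m + t))\<^sup>2 / (2 * 1\<^sup>2)) = exp (- (x - m)\<^sup>2 / (2 * 1\<^sup>2)) * exp (t * (x - m) - t\<^sup>2 / 2)"
    by (simp only: exp_add)
  then show ?thesis unfolding normal_density_def by simp
qed

lemma comp2_meas:
  assumes "j \<in> J" "i \<in> I"
  shows "(\<lambda>X. X j i) \<in> borel_measurable (PiM J (\<lambda>_. PiM I (\<lambda>_. lborel)))"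
  using measurable_compose[OF measurable_component_singleton[OF assms(1), of "\<lambda>_. PiM I (\<lambda>_. lborel)"]
    measurable_component_singleton[OF assms(2), of "\<lambda>_. lborel"]]
  by (simp add: measurable_lborel1)

lemma gdens_measurable[measurable]: "gdens d n \<mu> \<in> borel_measurable (sample_space_borel d n)"
  unfolding gdens_def[abs_def] sample_space_borel_def
  by (intro borel_measurable_prod) (auto intro: measurable_compose[OF comp2_meas borel_measurable_normal_density])

lemma gdens_nonneg: "0 \<le> gdens d n \<mu> X"
  unfolding gdens_def by (intro prod_nonneg) auto

lemma gdens_shift:
  assumes "i < d"
  shows "gdens d n (\<mu>(i := \<mu> i + t)) X = gdens d n \<mu> X * (\<Prod>j<n. exp (t * (X j i - \<mu> i) - t\<^sup>2 / 2))"
proof -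
  have inner: "(\<Prod>l<d. normal_density ((\<mu>(i := \<mu> i + t)) l) 1 (X j l))
      = (\<Prod>l<d. normal_density (\<mu> l) 1 (X j l)) * exp (t * (X j i - \<mu> i) - t\<^sup>2 / 2)" for j
  proof -
    have "(\<Prod>l<d. normal_density ((\<mu>(i := \<mu> i + t)) l) 1 (X j l))
       = normal_density (\<mu> i + t) 1 (X j i) * (\<Prod>l\<in>{..<d} - {i}. normal_density ((\<mu>(i := \<mu> i + t)) l) 1 (X j l))"
      using assms by (subst prod.remove[of _ i]) auto
    also have "(\<Prod>l\<in>{..<d} - {i}. normal_density ((\<mu>(i := \<mu> i + t)) l) 1 (X j l))
        = (\<Prod>l\<in>{..<d} - {i}. normal_density (\<mu> l) 1 (X j l))"
      by (rule prod.cong) auto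
    also have "(\<Prod>l<d. normal_density (\<mu> l) 1 (X j l)) = normal_density (\<mu> i) 1 (X j i) * (\<Prod>l\<in>{..<d} - {i}. normal_density (\<mu> l) 1 (X j l))"
      using assms by (subst prod.remove[of _ i]) auto
    ultimately show ?thesis by (simp add: normal_density_shift)
  qed
  show ?thesis unfolding gdens_def by (simp only: inner prod.distrib)
qed

lemma gdens_shift2:
  assumes "i < d"
  shows "gdens d n \<mu> X * (\<Prod>j<n. exp (t * (X j i - \<mu> i) - t\<^sup>2 / 2))\<^sup>2
     = gdens d n (\<mu>(i := \<mu> i + 2 * t)) X * exp (real n * t\<^sup>2)"
proof -
  have "(\<Prod>j<n. exp (t * (X j i - \<mu> i) - t\<^sup>2 / 2))\<^sup>2 = (\<Prod>j<n. exp (t * (X j i - \<mu> i) - t\<^sup>2 / 2) ^ 2)"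
    by (simp add: prod_power_distrib)
  also have "\<dots> = (\<Prod>j<n. exp ((2 * t) * (X j i - \<mu> i) - (2 * t)\<^sup>2 / 2) * exp (t\<^sup>2))"
  proof (rule prod.cong[OF refl])
    fix j
    have "exp (t * (X j i - \<mu> i) - t\<^sup>2 / 2) ^ 2 = exp (2 * (t * (X j i - \<mu> i) - t\<^sup>2 / 2))"
      by (simp add: exp_of_nat_mult[symmetric])
    also have "2 * (t * (X j i - \<mu> i) - t\<^sup>2 / 2) = ((2 * t) * (X j i - \<mu> i) - (2 * t)\<^sup>2 / 2) + t\<^sup>2"
      by (simp add: power2_eq_square algebra_simps)
    finally show "exp (t * (X j i - \<mu> i) - t\<^sup>2 / 2) ^ 2 = exp ((2 * t) * (X j i - \<mu> i) - (2 * t)\<^sup>2 / 2) * exp (t\<^sup>2)"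
      by (simp add: mult_exp_exp power2_eq_square algebra_simps)
  qed
  also have "\<dots> = (\<Prod>j<n. exp ((2 * t) * (X j i - \<mu> i) - (2 * t)\<^sup>2 / 2)) * exp (real n * t\<^sup>2)"
    by (simp add: prod.distrib exp_of_nat_mult)
  finally show ?thesis using gdens_shift[OF assms, where t="2 * t" and n=n and \<mu>=\<mu> and X=X] by (simp add: mult.assoc)
qed


lemma dens_transfer:
  assumes eq: "\<And>X. gdens d n \<mu>' X * a X = gdens d n \<mu> X * b X"
    and am[measurable]: "a \<in> borel_measurable (sample_space_borel d n)"
    and bm[measurable]: "b \<in> borel_measurable (sample_space_borel d n)"
    and ia: "integrable (gauss_sample d n \<mu>') a"
  shows "integrable (gauss_sample d n \<mu>) b \<and> integral\<^sup>L (gauss_sample d n \<mu>) b = integral\<^sup>L (gauss_sample d n \<mu>') a"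
proof -
  have nn: "AE x in sample_space_borel d n. 0 \<le> gdens d n \<nu> x" for \<nu> by (simp add: gdens_nonneg)
  have "integrable (sample_space_borel d n) (\<lambda>x. gdens d n \<mu>' x *\<^sub>R a x)"
    using ia unfolding gauss_density integrable_density[OF am gdens_measurable nn] .
  then have "integrable (sample_space_borel d n) (\<lambda>x. gdens d n \<mu> x *\<^sub>R b x)"
    using eq by simp
  then have 1: "integrable (gauss_sample d n \<mu>) b"
    unfolding gauss_density integrable_density[OF bm gdens_measurable nn] .
  have "integral\<^sup>L (gauss_sample d n \<mu>) b = integral\<^sup>L (sample_space_borel d n) (\<lambda>x. gdens d n \<mu> x *\<^sub>R b x)"
    unfolding gauss_density by (rule integral_density[OF bm gdens_measurable nn])
  also have "\<dots> = integral\<^sup>L (sample_space_borel d n) (\<lambda>x. gdens d n \<mu>' x *\<^sub>R a x)"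
    using eq by simp
  also have "\<dots> = integral\<^sup>L (gauss_sample d n \<mu>') a"
    unfolding gauss_density by (rule integral_density[OF am gdens_measurable nn, symmetric])
  finally show ?thesis using 1 by simp
qed

lemma Lr_measurable[measurable]:
  assumes "i < d"
  shows "(\<lambda>X. \<Prod>j<n. exp (t * (X j i - \<mu> i) - t\<^sup>2 / 2)) \<in> borel_measurable (sample_space_borel d n)"
  unfolding sample_space_borel_def
  using assms by (intro borel_measurable_prod) (auto intro!: measurable_compose[OF comp2_meas])

lemma hcr:
  assumes i: "i < d" and lam: "l > 0"
    and hm[measurable]: "h \<in> borel_measurable (sample_space_borel d n)"
    and ih: "integrable (gauss_sample d n \<mu>) h"
    and ih2: "integrable (gauss_sample d n \<mu>) (\<lambda>X. (h X - (\<integral>Y. h Y \<partial>gauss_sample d n \<mu>))\<^sup>2)"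
    and ihv: "integrable (gauss_sample d n (\<mu>(i := \<mu> i + t))) h"
  shows "(\<integral>X. h X \<partial>gauss_sample d n (\<mu>(i := \<mu> i + t))) - (\<integral>X. h X \<partial>gauss_sample d n \<mu>)
     \<le> (l * (\<integral>X. (h X - (\<integral>Y. h Y \<partial>gauss_sample d n \<mu>))\<^sup>2 \<partial>gauss_sample d n \<mu>) + (exp (real n * t\<^sup>2) - 1) / l) / 2"
proof -
  define M where "M = gauss_sample d n \<mu>"
  define m where "m = (\<integral>Y. h Y \<partial>M)"
  define V where "V = (\<integral>X. (h X - m)\<^sup>2 \<partial>M)"
  define L where "L = (\<lambda>X. \<Prod>j<n. exp (t * (X j i - \<mu> i) - t\<^sup>2 / 2))"
  interpret P: prob_space M unfolding M_def by (rule prob_gauss)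
  interpret P\<nu>: prob_space "gauss_sample d n (\<mu>(i := \<mu> i + t))" by (rule prob_gauss)
  interpret P2: prob_space "gauss_sample d n (\<mu>(i := \<mu> i + 2 * t))" by (rule prob_gauss)
  have Lm[measurable]: "L \<in> borel_measurable (sample_space_borel d n)" unfolding L_def using i by measurable
  have t1: "integrable M (\<lambda>X. L X * h X) \<and> (\<integral>X. L X * h X \<partial>M) = (\<integral>X. h X \<partial>gauss_sample d n (\<mu>(i := \<mu> i + t)))"
  proof -
    have Lhm: "(\<lambda>X. L X * h X) \<in> borel_measurable (sample_space_borel d n)" by measurable
    show ?thesis unfolding M_def by (rule dens_transfer[OF _ hm Lhm ihv]) (simp add: gdens_shift[OF i] L_def)
  qed
  have t2: "integrable M L \<and> (\<integral>X. L X \<partial>M) = (\<integral>X. 1 \<partial>gauss_sample d n (\<mu>(i := \<mu> i + t)))"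
    unfolding M_def by (rule dens_transfer[OF _ _ Lm]) (auto simp: gdens_shift[OF i] L_def)
  have t3: "integrable M (\<lambda>X. (L X)\<^sup>2) \<and> (\<integral>X. (L X)\<^sup>2 \<partial>M) = (\<integral>X. exp (real n * t\<^sup>2) \<partial>gauss_sample d n (\<mu>(i := \<mu> i + 2 * t)))"
  proof -
    have L2m: "(\<lambda>X. (L X)\<^sup>2) \<in> borel_measurable (sample_space_borel d n)" by measurable
    show ?thesis unfolding M_def by (rule dens_transfer[OF _ _ L2m]) (auto simp: gdens_shift2[OF i] L_def)
  qed
  have EL: "(\<integral>X. L X \<partial>M) = 1" using t2 P\<nu>.prob_space by simp
  have EL2: "(\<integral>X. (L X)\<^sup>2 \<partial>M) = exp (real n * t\<^sup>2)" using t3 P2.prob_space by simp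
  have ih': "integrable M h" using ih unfolding M_def .
  have ih2': "integrable M (\<lambda>X. (h X - m)\<^sup>2)" using ih2 unfolding M_def m_def .
  have f1: "(\<lambda>X. (L X - 1) * (h X - m)) = (\<lambda>X. L X * h X - m * L X - h X + m)"
    by (auto simp: fun_eq_iff algebra_simps)
  have f2: "(\<lambda>X. (l * (h X - m)\<^sup>2 + (L X - 1)\<^sup>2 / l) / 2)
      = (\<lambda>X. (l / 2) * (h X - m)\<^sup>2 + (1 / (2 * l)) * ((L X)\<^sup>2 - 2 * L X + 1))"
    using lam by (auto simp: fun_eq_iff field_simps power2_eq_square)
  have int1: "integrable M (\<lambda>X. (L X - 1) * (h X - m))"
    unfolding f1 using t1 t2 ih' by (auto intro: P.integrable_const)
  have int2: "integrable M (\<lambda>X. (l * (h X - m)\<^sup>2 + (L X - 1)\<^sup>2 / l) / 2)"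
    unfolding f2 using t3 t2 ih2' by (auto intro: P.integrable_const)
  have "(\<integral>X. (L X - 1) * (h X - m) \<partial>M) \<le> (\<integral>X. (l * (h X - m)\<^sup>2 + (L X - 1)\<^sup>2 / l) / 2 \<partial>M)"
  proof (rule integral_mono[OF int1 int2])
    fix X
    have "0 \<le> (l * (h X - m) - (L X - 1))\<^sup>2 / l" using lam by simp
    also have "(l * (h X - m) - (L X - 1))\<^sup>2 / l = l * (h X - m)\<^sup>2 + (L X - 1)\<^sup>2 / l - 2 * ((L X - 1) * (h X - m))"
      using lam by (simp add: field_simps power2_eq_square)
    finally show "(L X - 1) * (h X - m) \<le> (l * (h X - m)\<^sup>2 + (L X - 1)\<^sup>2 / l) / 2" by simp
  qed
  also have "(\<integral>X. (l * (h X - m)\<^sup>2 + (L X - 1)\<^sup>2 / l) / 2 \<partial>M) = (l * V + (exp (real n * t\<^sup>2) - 1) / l) / 2"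
    unfolding f2 V_def using t3 t2 ih2' EL EL2 lam P.prob_space
    by (simp add: integral_add integral_diff integrable_mult_right field_simps)
  also have "(\<integral>X. (L X - 1) * (h X - m) \<partial>M) = (\<integral>X. h X \<partial>gauss_sample d n (\<mu>(i := \<mu> i + t))) - m"
    unfolding f1 using t1 t2 ih' EL P.prob_space by (simp add: integral_add integral_diff integrable_mult_right m_def)
  finally show ?thesis unfolding M_def m_def V_def by simp
qed


lemma abs_le_1_sq: "\<bar>x::real\<bar> \<le> 1 + x\<^sup>2"
proof -
  have "0 \<le> (\<bar>x\<bar> - 1/2)\<^sup>2" by simp
  then have "0 \<le> \<bar>x\<bar> * \<bar>x\<bar> - \<bar>x\<bar> + 1/4" by (simp add: power2_eq_square algebra_simps)
  then show ?thesis by (simp add: power2_eq_square abs_mult_self)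
qed

lemma mse_facts:
  assumes meas: "\<forall>i<d. (\<lambda>X. f X i) \<in> borel_measurable (sample_space_borel d n)"
    and bound: "mse d n f \<mu> \<le> ennreal Cb" and Cb: "Cb \<ge> 0"
    and i: "i < d"
  shows "integrable (gauss_sample d n \<mu>) (\<lambda>X. f X i)
     \<and> integrable (gauss_sample d n \<mu>) (\<lambda>X. (f X i - (\<integral>Y. f Y i \<partial>gauss_sample d n \<mu>))\<^sup>2)
     \<and> \<bar>(\<integral>Y. f Y i \<partial>gauss_sample d n \<mu>) - \<mu> i\<bar> \<le> sqrt Cb"
proof -
  define M where "M = gauss_sample d n \<mu>"
  interpret P: prob_space M unfolding M_def by (rule prob_gauss)
  have fm[measurable]: "\<And>l. l \<in> {..<d} \<Longrightarrow> (\<lambda>X. f X l) \<in> borel_measurable M"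
    unfolding M_def gauss_density using meas by simp
  define g where "g = (\<lambda>X. \<Sum>l<d. (f X l - \<mu> l)\<^sup>2)"
  have gm[measurable]: "g \<in> borel_measurable M" unfolding g_def by measurable
  have gnn: "0 \<le> g X" for X unfolding g_def by (simp add: sum_nonneg)
  have mse_eq: "mse d n f \<mu> = (\<integral>\<^sup>+X. ennreal (g X) \<partial>M)" unfolding mse_def M_def g_def ..
  have fin: "(\<integral>\<^sup>+X. ennreal (g X) \<partial>M) < \<infinity>"
    using bound unfolding mse_eq by (simp add: le_less_trans)
  have gi: "integrable M g" by (rule integrableI_nonneg[OF gm]) (use gnn fin in auto)
  have "ennreal (\<integral>X. g X \<partial>M) \<le> ennreal Cb"
    using bound unfolding mse_eq nn_integral_eq_integral[OF gi AE_I2[OF gnn]] .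
  then have gle: "(\<integral>X. g X \<partial>M) \<le> Cb" using Cb by simp
  define sq where "sq = (\<lambda>X. (f X i - \<mu> i)\<^sup>2)"
  have fim: "(\<lambda>X. f X i) \<in> borel_measurable M" using fm i by simp
  have dm: "(\<lambda>X. f X i - \<mu> i) \<in> borel_measurable M"
    using measurable_compose[OF fim, of "\<lambda>x. x - \<mu> i" borel] by simp
  have sqm[measurable]: "sq \<in> borel_measurable M"
    using measurable_compose[OF fim, of "\<lambda>x. (x - \<mu> i)\<^sup>2" borel] unfolding sq_def by simp
  have sqg: "sq X \<le> g X" for X
    unfolding sq_def g_def by (rule member_le_sum) (use i in auto)
  have sqi: "integrable M sq"
    by (rule Bochner_Integration.integrable_bound[OF gi sqm]) (use sqg gnn in \<open>auto simp: sq_def\<close>)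
  have sqle: "(\<integral>X. sq X \<partial>M) \<le> Cb"
    using integral_mono[OF sqi gi sqg] gle by linarith
  have di: "integrable M (\<lambda>X. f X i - \<mu> i)"
  proof (rule Bochner_Integration.integrable_bound[of M "\<lambda>X. 1 + sq X"])
    show "integrable M (\<lambda>X. 1 + sq X)" using sqi by auto
    show "(\<lambda>X. f X i - \<mu> i) \<in> borel_measurable M" by (rule dm)
    show "AE X in M. norm (f X i - \<mu> i) \<le> norm (1 + sq X)"
      by (rule AE_I2) (simp add: sq_def abs_le_1_sq)
  qed
  have fi: "integrable M (\<lambda>X. f X i)"
  proof -
    have "integrable M (\<lambda>X. (f X i - \<mu> i) + \<mu> i)"
      by (rule Bochner_Integration.integrable_add[OF di P.integrable_const])
    then show ?thesis by simp
  qed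
  define m where "m = (\<integral>Y. f Y i \<partial>M)"
  define a where "a = m - \<mu> i"
  have Ed: "(\<integral>X. f X i - \<mu> i \<partial>M) = a"
    unfolding a_def m_def using fi P.prob_space by simp
  have pw: "2 * a * (f X i - \<mu> i) - a\<^sup>2 \<le> sq X" for X
  proof -
    have "0 \<le> (f X i - \<mu> i - a)\<^sup>2" by simp
    then show ?thesis unfolding sq_def by (simp add: power2_eq_square algebra_simps)
  qed
  have "(\<integral>X. 2 * a * (f X i - \<mu> i) - a\<^sup>2 \<partial>M) \<le> (\<integral>X. sq X \<partial>M)"
    by (rule integral_mono[OF _ sqi pw]) (use di in auto)
  moreover have "(\<integral>X. 2 * a * (f X i - \<mu> i) - a\<^sup>2 \<partial>M) = 2 * a * a - a\<^sup>2"
    using di Ed P.prob_space by simp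
  ultimately have "a\<^sup>2 \<le> Cb" using sqle by (simp add: power2_eq_square)
  then have ab: "\<bar>a\<bar> \<le> sqrt Cb" using real_sqrt_le_mono[of "a\<^sup>2" Cb] by simp
  have fe: "(\<lambda>X. (f X i - m)\<^sup>2) = (\<lambda>X. sq X - 2 * a * (f X i - \<mu> i) + a\<^sup>2)"
    unfolding sq_def a_def by (auto simp: fun_eq_iff power2_eq_square algebra_simps)
  have "integrable M (\<lambda>X. (f X i - m)\<^sup>2)"
    unfolding fe using sqi di by auto
  then show ?thesis using fi ab unfolding M_def m_def a_def by simp
qed

lemma var_est_eq:
  assumes meas: "\<forall>i<d. (\<lambda>X. f X i) \<in> borel_measurable (sample_space_borel d n)"
    and ints: "\<And>i. i < d \<Longrightarrow> integrable (gauss_sample d n \<mu>) (\<lambda>X. (f X i - (\<integral>Y. f Y i \<partial>gauss_sample d n \<mu>))\<^sup>2)"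
  shows "var_est d n f \<mu> = ennreal (\<Sum>i<d. \<integral>X. (f X i - (\<integral>Y. f Y i \<partial>gauss_sample d n \<mu>))\<^sup>2 \<partial>gauss_sample d n \<mu>)"
proof -
  define M where "M = gauss_sample d n \<mu>"
  have si: "integrable M (\<lambda>X. \<Sum>i<d. (f X i - (\<integral>Y. f Y i \<partial>M))\<^sup>2)"
    by (rule Bochner_Integration.integrable_sum) (use ints in \<open>auto simp: M_def\<close>)
  have "var_est d n f \<mu> = (\<integral>\<^sup>+X. ennreal (\<Sum>i<d. (f X i - (\<integral>Y. f Y i \<partial>M))\<^sup>2) \<partial>M)"
    unfolding var_est_def M_def ..
  also have "\<dots> = ennreal (\<integral>X. (\<Sum>i<d. (f X i - (\<integral>Y. f Y i \<partial>M))\<^sup>2) \<partial>M)"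
    by (rule nn_integral_eq_integral[OF si]) (simp add: sum_nonneg)
  also have "(\<integral>X. (\<Sum>i<d. (f X i - (\<integral>Y. f Y i \<partial>M))\<^sup>2) \<partial>M) = (\<Sum>i<d. \<integral>X. (f X i - (\<integral>Y. f Y i \<partial>M))\<^sup>2 \<partial>M)"
    by (rule Bochner_Integration.integral_sum) (use ints in \<open>auto simp: M_def\<close>)
  finally show ?thesis unfolding M_def .
qed

lemma PiE_slice_at:
  assumes "k \<in> PiE {..<d} (\<lambda>j. if j = i then {r} else A)" "i < d"
  shows "k i = r"
  using PiE_mem[OF assms(1), of i] assms(2) by simp

lemma PiE_upd_slice:
  assumes "k \<in> PiE {..<d} (\<lambda>j. if j = i then {r} else A)" "i < d"
  shows "k(i := s) \<in> PiE {..<d} (\<lambda>j. if j = i then {s} else A)"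
proof (rule PiE_I)
  fix j assume "j \<in> {..<d}"
  then show "(k(i := s)) j \<in> (if j = i then {s} else A)"
    using PiE_mem[OF assms(1), of j] by auto
next
  fix j assume "j \<notin> {..<d}"
  then show "(k(i := s)) j = undefined" using PiE_arb[OF assms(1), of j] assms(2) by auto
qed

lemma PiE_to_slice:
  assumes "k \<in> PiE {..<d} (\<lambda>_. A)"
  shows "k \<in> PiE {..<d} (\<lambda>j. if j = i then {k i} else A)"
proof (rule PiE_I)
  fix j assume "j \<in> {..<d}"
  then show "k j \<in> (if j = i then {k i} else A)"
    using PiE_mem[OF assms(1), of j] by auto
next
  fix j assume "j \<notin> {..<d}"
  then show "k j = undefined" using PiE_arb[OF assms(1), of j] by auto
qed

lemma PiE_from_slice:
  assumes "k \<in> PiE {..<d} (\<lambda>j. if j = i then {r} else A)" "r \<in> A"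
  shows "k \<in> PiE {..<d} (\<lambda>_. A)"
proof (rule PiE_I)
  fix j assume "j \<in> {..<d}"
  then show "k j \<in> A"
    using PiE_mem[OF assms(1), of j] assms(2) by (auto split: if_splits)
next
  fix j assume "j \<notin> {..<d}"
  then show "k j = undefined" using PiE_arb[OF assms(1), of j] by auto
qed

lemma grid_slice_card:
  assumes "i < d"
  shows "card (PiE {..<d} (\<lambda>j. if j = i then {r} else {..<(K::nat)})) = K ^ (d - 1)"
proof -
  have "card (PiE {..<d} (\<lambda>j. if j = i then {r} else {..<(K::nat)}))
      = (\<Prod>j<d. card (if j = i then {r} else {..<K}))" by (simp add: card_PiE)
  also have "\<dots> = (\<Prod>j\<in>{..<d} - {i}. K)"
    using assms by (subst prod.remove[of _ i]) (auto intro!: prod.cong)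
  also have "\<dots> = K ^ (d - 1)" using assms by simp
  finally show ?thesis .
qed

lemma grid_telescope:
  fixes h :: "(nat \<Rightarrow> nat) \<Rightarrow> real"
  assumes "i < d" and K: "K > 0"
  defines "G \<equiv> PiE {..<d} (\<lambda>_. {..<K})"
  defines "P \<equiv> \<lambda>r. PiE {..<d} (\<lambda>j. if j = i then {r} else {..<K})"
  shows "(\<Sum>k\<in>G. h (k(i := Suc (k i))) - h k) = sum h (P K) - sum h (P 0)"
proof -
  have fin: "finite (P r)" for r unfolding P_def by (auto intro!: finite_PiE)
  have GU: "G = (\<Union>r<K. P r)"
  proof
    show "G \<subseteq> (\<Union>r<K. P r)"
    proof
      fix k assume k: "k \<in> G"
      then have "k i \<in> {..<K}" unfolding G_def using assms(1) by (auto dest: PiE_mem)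
      moreover have "k \<in> P (k i)" unfolding P_def using k unfolding G_def by (rule PiE_to_slice)
      ultimately show "k \<in> (\<Union>r<K. P r)" by blast
    qed
    show "(\<Union>r<K. P r) \<subseteq> G"
    proof
      fix k assume "k \<in> (\<Union>r<K. P r)"
      then obtain r where r: "r \<in> {..<K}" "k \<in> P r" by blast
      show "k \<in> G" unfolding G_def by (rule PiE_from_slice[OF r(2)[unfolded P_def] r(1)])
    qed
  qed
  have disj: "P r \<inter> P s = {}" if "r \<noteq> s" for r s
  proof -
    { fix k assume "k \<in> P r" "k \<in> P s"
      then have "k i = r" "k i = s" unfolding P_def using assms(1) by (auto intro: PiE_slice_at)
      then have False using that by simp }
    then show ?thesis by blast
  qed
  have "(\<Sum>k\<in>G. h (k(i := Suc (k i))) - h k) = (\<Sum>r<K. \<Sum>k\<in>P r. h (k(i := Suc (k i))) - h k)"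
    unfolding GU by (rule sum.UNION_disjoint) (auto simp: fin disj)
  also have "\<dots> = (\<Sum>r<K. sum h (P (Suc r)) - sum h (P r))"
  proof (rule sum.cong[OF refl])
    fix r assume "r \<in> {..<K}"
    have ki: "k i = r" if "k \<in> P r" for k using that assms(1) unfolding P_def by (rule PiE_slice_at)
    have bij: "bij_betw (\<lambda>k. k(i := Suc r)) (P r) (P (Suc r))"
    proof (rule bij_betw_byWitness[where f'="\<lambda>k. k(i := r)"])
      show "\<forall>a\<in>P r. a(i := Suc r, i := r) = a" using ki by auto
      show "\<forall>a'\<in>P (Suc r). a'(i := r, i := Suc r) = a'"
      proof
        fix a' assume "a' \<in> P (Suc r)"
        then have "a' i = Suc r" unfolding P_def using assms(1) by (rule PiE_slice_at)
        then show "a'(i := r, i := Suc r) = a'" by auto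
      qed
      show "(\<lambda>k. k(i := Suc r)) ` P r \<subseteq> P (Suc r)"
      proof (rule image_subsetI)
        fix k assume "k \<in> P r"
        then show "k(i := Suc r) \<in> P (Suc r)" unfolding P_def using assms(1) by (rule PiE_upd_slice)
      qed
      show "(\<lambda>k. k(i := r)) ` P (Suc r) \<subseteq> P r"
      proof (rule image_subsetI)
        fix k assume "k \<in> P (Suc r)"
        then show "k(i := r) \<in> P r" unfolding P_def using assms(1) by (rule PiE_upd_slice)
      qed
    qed
    have "(\<Sum>k\<in>P r. h (k(i := Suc (k i))) - h k) = (\<Sum>k\<in>P r. h (k(i := Suc r))) - sum h (P r)"
      by (simp add: sum_subtractf ki)
    also have "(\<Sum>k\<in>P r. h (k(i := Suc r))) = sum h (P (Suc r))"
      using sum.reindex_bij_betw[OF bij, of h] by simp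
    finally show "(\<Sum>k\<in>P r. h (k(i := Suc (k i))) - h k) = sum h (P (Suc r)) - sum h (P r)" .
  qed
  also have "\<dots> = sum h (P K) - sum h (P 0)"
    by (rule sum_lessThan_telescope)
  finally show ?thesis .
qed

lemma grid_exists:
  fixes m :: "(nat \<Rightarrow> real) \<Rightarrow> nat \<Rightarrow> real"
  assumes K: "K > 0" and d: "d > 0" and B: "B \<ge> 0"
    and bnd: "\<And>\<mu> i. i < d \<Longrightarrow> \<bar>m \<mu> i - \<mu> i\<bar> \<le> B"
  shows "\<exists>\<mu>. (\<Sum>i<d. m (\<mu>(i := \<mu> i + \<delta>)) i - m \<mu> i) \<ge> real d * (\<delta> - 2 * B / real K)"
proof (rule ccontr)
  assume neg: "\<not> ?thesis"
  define G where "G = PiE {..<d} (\<lambda>_. {..<K})"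
  define P where "P = (\<lambda>i r. PiE {..<d} (\<lambda>j. if j = i then {r::nat} else {..<K}))"
  define pt where "pt = (\<lambda>k::nat\<Rightarrow>nat. \<lambda>j. \<delta> * real (k j))"
  define D where "D = (\<lambda>k. (\<Sum>i<d. m ((pt k)(i := pt k i + \<delta>)) i - m (pt k) i))"
  have ptu: "(pt k)(i := pt k i + \<delta>) = pt (k(i := Suc (k i)))" for k i
    unfolding pt_def by (auto simp: algebra_simps)
  have finP: "finite (P i r)" for i r unfolding P_def by (auto intro!: finite_PiE)
  have per: "(\<Sum>k\<in>G. m ((pt k)(i := pt k i + \<delta>)) i - m (pt k) i) \<ge> real (K ^ (d - 1)) * (real K * \<delta> - 2 * B)"
    if i: "i < d" for i
  proof -
    let ?h = "\<lambda>k. m (pt k) i"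
    have "(\<Sum>k\<in>G. m ((pt k)(i := pt k i + \<delta>)) i - m (pt k) i) = (\<Sum>k\<in>G. ?h (k(i := Suc (k i))) - ?h k)"
      by (simp add: ptu)
    also have "\<dots> = sum ?h (P i K) - sum ?h (P i 0)"
      unfolding G_def P_def by (rule grid_telescope[OF i K])
    finally have eq: "(\<Sum>k\<in>G. m ((pt k)(i := pt k i + \<delta>)) i - m (pt k) i) = sum ?h (P i K) - sum ?h (P i 0)" .
    have cK: "card (P i r) = K ^ (d - 1)" for r unfolding P_def by (rule grid_slice_card[OF i])
    have "sum ?h (P i K) \<ge> (\<Sum>k\<in>P i K. real K * \<delta> - B)"
    proof (rule sum_mono)
      fix k assume "k \<in> P i K"
      then have "k i = K" using i unfolding P_def by (rule PiE_slice_at)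
      then have "pt k i = real K * \<delta>" unfolding pt_def by simp
      with bnd[OF i, of "pt k"] show "real K * \<delta> - B \<le> ?h k" by linarith
    qed
    moreover have "sum ?h (P i 0) \<le> (\<Sum>k\<in>P i 0. B)"
    proof (rule sum_mono)
      fix k assume "k \<in> P i 0"
      then have "k i = 0" using i unfolding P_def by (rule PiE_slice_at)
      then have "pt k i = 0" unfolding pt_def by simp
      with bnd[OF i, of "pt k"] show "?h k \<le> B" by linarith
    qed
    ultimately show ?thesis unfolding eq using cK by (simp add: algebra_simps)
  qed
  have "(\<Sum>k\<in>G. D k) = (\<Sum>i<d. \<Sum>k\<in>G. m ((pt k)(i := pt k i + \<delta>)) i - m (pt k) i)"
    unfolding D_def by (rule sum.swap)
  also have "\<dots> \<ge> (\<Sum>i<d. real (K ^ (d - 1)) * (real K * \<delta> - 2 * B))"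
    by (rule sum_mono) (use per in auto)
  finally have ge: "(\<Sum>k\<in>G. D k) \<ge> real d * real (K ^ (d - 1)) * (real K * \<delta> - 2 * B)" by simp
  have cG: "card G = K ^ d" unfolding G_def by (simp add: card_PiE)
  have Gne: "G \<noteq> {}" unfolding G_def using K by (auto simp: PiE_eq_empty_iff)
  have finG: "finite G" unfolding G_def by (auto intro!: finite_PiE)
  have neg': "(\<Sum>i<d. m (\<mu>(i := \<mu> i + \<delta>)) i - m \<mu> i) < real d * (\<delta> - 2 * B / real K)" for \<mu>
    using neg by (simp add: not_le)
  have lt: "D k < real d * (\<delta> - 2 * B / real K)" for k
    unfolding D_def by (rule neg')
  have "(\<Sum>k\<in>G. D k) < (\<Sum>k\<in>G. real d * (\<delta> - 2 * B / real K))"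
    by (rule sum_strict_mono[OF finG Gne lt])
  also have "\<dots> = real (K ^ d) * (real d * (\<delta> - 2 * B / real K))" using cG by simp
  also have "\<dots> = real d * real (K ^ (d - 1)) * (real K * \<delta> - 2 * B)"
  proof -
    have "K ^ d = K * K ^ (d - 1)" using d by (cases d) auto
    then show ?thesis using K by (simp add: field_simps)
  qed
  finally have "(\<Sum>k\<in>G. D k) < real d * real (K ^ (d - 1)) * (real K * \<delta> - 2 * B)" .
  with ge show False by simp
qed


theorem propositionI1:
  shows "\<exists>c_var::real. c_var > 0 \<and>
    (\<forall>(d::nat) (n::nat) (C_MSE::real) (f :: (nat \<Rightarrow> nat \<Rightarrow> real) \<Rightarrow> nat \<Rightarrow> real).
       d \<ge> 1 \<longrightarrow> n \<ge> 1 \<longrightarrow> C_MSE > 0 \<longrightarrow>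
       (\<forall>i<d. (\<lambda>X. f X i) \<in> borel_measurable (sample_space_borel d n)) \<longrightarrow>
       (SUP \<mu>. mse d n f \<mu>) \<le> ennreal (C_MSE * real d / real n) \<longrightarrow>
       (\<exists>\<mu>. var_est d n f \<mu> \<ge> ennreal (c_var * real d / real n)))"
proof (intro exI[of _ "1/8"] conjI allI impI)
  show "(0::real) < 1/8" by simp
  fix d n :: nat and C_MSE :: real and f :: "(nat \<Rightarrow> nat \<Rightarrow> real) \<Rightarrow> nat \<Rightarrow> real"
  assume d1: "d \<ge> 1" and n1: "n \<ge> 1" and C: "C_MSE > 0"
    and meas: "\<forall>i<d. (\<lambda>X. f X i) \<in> borel_measurable (sample_space_borel d n)"
    and sup: "(SUP \<mu>. mse d n f \<mu>) \<le> ennreal (C_MSE * real d / real n)"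
  show "\<exists>\<mu>. var_est d n f \<mu> \<ge> ennreal (1/8 * real d / real n)"
  proof (rule ccontr)
    assume neg: "\<not> ?thesis"
    define Cb where "Cb = C_MSE * real d / real n"
    have Cb0: "Cb \<ge> 0" using C by (simp add: Cb_def)
    have bnd: "mse d n f \<mu> \<le> ennreal Cb" for \<mu>
      using order_trans[OF SUP_upper[of \<mu> UNIV "mse d n f"] sup] unfolding Cb_def by simp
    have F: "integrable (gauss_sample d n \<mu>) (\<lambda>X. f X i)
     \<and> integrable (gauss_sample d n \<mu>) (\<lambda>X. (f X i - (\<integral>Y. f Y i \<partial>gauss_sample d n \<mu>))\<^sup>2)
     \<and> \<bar>(\<integral>Y. f Y i \<partial>gauss_sample d n \<mu>) - \<mu> i\<bar> \<le> sqrt Cb" if "i < d" for \<mu> i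
      by (rule mse_facts[OF meas bnd Cb0 that])
    define mm where "mm = (\<lambda>\<mu> i. \<integral>Y. f Y i \<partial>gauss_sample d n \<mu>)"
    define B where "B = sqrt Cb"
    define \<delta> where "\<delta> = 1 / sqrt (real n)"
    have npos: "real n > 0" using n1 by simp
    have \<delta>pos: "\<delta> > 0" unfolding \<delta>_def using npos by simp
    have nd2: "real n * \<delta>\<^sup>2 = 1" unfolding \<delta>_def using npos by (simp add: power_divide)
    have B0: "B \<ge> 0" unfolding B_def using Cb0 by simp
    define K where "K = nat \<lceil>4 * B / \<delta>\<rceil> + 1"
    have K0: "K > 0" unfolding K_def by simp
    have "4 * B / \<delta> \<le> real (nat \<lceil>4 * B / \<delta>\<rceil>)" by (rule real_nat_ceiling_ge)
    then have "4 * B / \<delta> \<le> real K" unfolding K_def by simp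
    then have "4 * B \<le> \<delta> * real K" using \<delta>pos by (simp add: divide_le_eq mult.commute)
    then have KB: "2 * B / real K \<le> \<delta> / 2" using K0 by (simp add: field_simps)
    have mmb: "\<bar>mm \<mu> i - \<mu> i\<bar> \<le> B" if "i < d" for \<mu> i
      using F[OF that, of \<mu>] unfolding mm_def B_def by blast
    obtain \<mu> where \<mu>: "(\<Sum>i<d. mm (\<mu>(i := \<mu> i + \<delta>)) i - mm \<mu> i) \<ge> real d * (\<delta> - 2 * B / real K)"
    proof -
      have d0: "0 < d" using d1 by simp
      show ?thesis using grid_exists[where m=mm and B=B and d=d and K=K and \<delta>=\<delta>, OF K0 d0 B0 mmb] that by blast
    qed
    define V where "V = (\<lambda>i. \<integral>X. (f X i - (\<integral>Y. f Y i \<partial>gauss_sample d n \<mu>))\<^sup>2 \<partial>gauss_sample d n \<mu>)"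
    have e1: "exp (real n * \<delta>\<^sup>2) - 1 \<le> 2" using nd2 exp_le by simp
    have hc: "mm (\<mu>(i := \<mu> i + \<delta>)) i - mm \<mu> i \<le> 2 * V i / \<delta> + \<delta> / 4" if i: "i < d" for i
    proof -
      have hm: "(\<lambda>X. f X i) \<in> borel_measurable (sample_space_borel d n)" using meas i by simp
      have "mm (\<mu>(i := \<mu> i + \<delta>)) i - mm \<mu> i \<le> ((4 / \<delta>) * V i + (exp (real n * \<delta>\<^sup>2) - 1) / (4 / \<delta>)) / 2"
        unfolding mm_def V_def
        by (rule hcr[OF i _ hm]) (use \<delta>pos F[OF i] in auto)
      also have "\<dots> \<le> ((4 / \<delta>) * V i + 2 / (4 / \<delta>)) / 2"
        using e1 \<delta>pos by (intro divide_right_mono add_left_mono divide_right_mono) auto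
      also have "\<dots> = 2 * V i / \<delta> + \<delta> / 4" using \<delta>pos by (simp add: field_simps)
      finally show ?thesis .
    qed
    have "real d * (\<delta> / 2) \<le> real d * (\<delta> - 2 * B / real K)"
      using KB by (intro mult_left_mono) auto
    also have "\<dots> \<le> (\<Sum>i<d. mm (\<mu>(i := \<mu> i + \<delta>)) i - mm \<mu> i)" by (rule \<mu>)
    also have "\<dots> \<le> (\<Sum>i<d. 2 * V i / \<delta> + \<delta> / 4)" by (rule sum_mono) (use hc in auto)
    also have "\<dots> = 2 * (\<Sum>i<d. V i) / \<delta> + real d * \<delta> / 4"
      by (simp add: sum.distrib sum_divide_distrib[symmetric] sum_distrib_left[symmetric])
    finally have X: "real d * (\<delta> / 2) \<le> 2 * (\<Sum>i<d. V i) / \<delta> + real d * \<delta> / 4" .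
    have "real d * \<delta> / 4 \<le> 2 * (\<Sum>i<d. V i) / \<delta>" using X by linarith
    then have "real d * \<delta> * \<delta> / 8 \<le> (\<Sum>i<d. V i)" using \<delta>pos by (simp add: field_simps)
    moreover have "real d * \<delta> * \<delta> = real d / real n" using nd2 npos by (simp add: field_simps power2_eq_square)
    ultimately have Vge: "1/8 * real d / real n \<le> (\<Sum>i<d. V i)" by simp
    have "var_est d n f \<mu> = ennreal (\<Sum>i<d. V i)"
      unfolding V_def by (rule var_est_eq[OF meas]) (use F in blast)
    then have "var_est d n f \<mu> \<ge> ennreal (1/8 * real d / real n)" using Vge by (simp add: ennreal_leI)
    then show False using neg by blast
  qed
qed

end
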